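(* Let $G$ be a random threshold graph on $n\ge3$ vertices and let $\psi(G)$ be the length of a longest cycle in $G$. Then for every integer $k$ with $3\le k\le n$, $$P(\psi(G)=k)=\left(\tfrac12\right)^{n-1}\left[\binom{n-1}{\lfloor k/2\rfloor}-\binom{k-2}{\lfloor k/2\rfloor}\right].$$
   Context: A threshold graph on $n\ge1$ vertices is built from a base vertex $v_0$ by successively adding $v_1,\dots,v_{n-1}$, each either isolated (adjacent to no earlier vertex) or dominating (adjacent to all earlier vertices); its creation sequence $\mathrm{seq}(G)=s_1\cdots s_{n-1}$ has $s_i=1$ if $v_i$ is dominating and $s_i=0$ otherwise, and each unlabeled threshold graph on $n$ vertices corresponds to exactly one binary string of length $n-1$. A random threshold graph on $n$ vertices is one whose creation sequence is uniformly distributed over all $2^{n-1}$ binary strings of length $n-1$. *)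

theory Defs
  imports "HOL-Probability.Probability"
begin

text \<open>Threshold graph with creation sequence s = s_1 ... s_{n-1} (a bool list of
length n-1, where s ! (i-1) is s_i). Vertices are 0,...,n-1 (v_0 is the base vertex).
For i < j, v_i and v_j are adjacent iff v_j is dominating, i.e. s_j = 1.\<close>

definition tg_vertices :: "bool list \<Rightarrow> nat set" where
  "tg_vertices s = {0..<Suc (length s)}"

definition tg_adj :: "bool list \<Rightarrow> nat \<Rightarrow> nat \<Rightarrow> bool" where
  "tg_adj s i j \<longleftrightarrow> i \<noteq> j \<and> i \<in> tg_vertices s \<and> j \<in> tg_vertices s \<and> s ! (max i j - 1)"

definition tg_is_cycle :: "bool list \<Rightarrow> nat list \<Rightarrow> bool" where
  "tg_is_cycle s c \<longleftrightarrow> 3 \<le> length c \<and> distinct c \<and> set c \<subseteq> tg_vertices s \<and>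
     (\<forall>i < length c. tg_adj s (c ! i) (c ! ((i + 1) mod length c)))"

text \<open>Length of a longest cycle (0 if the graph is acyclic).\<close>

definition longest_cycle :: "bool list \<Rightarrow> nat" where
  "longest_cycle s = Max (insert 0 {length c | c. tg_is_cycle s c})"

end

theory Submission
  imports Defs
begin


fun gr :: "nat \<Rightarrow> bool list \<Rightarrow> nat" where
  "gr d [] = 0"
| "gr d (True # r) = Suc (gr (Suc d) r)"
| "gr d (False # r) = (if 2 \<le> d then Suc (gr (d - 1) r) else gr d r)"

fun M :: "bool list \<Rightarrow> nat" where
  "M [] = 0"
| "M (True # r) = M r - 1"
| "M (False # r) = Suc (M r)"

lemma M_le: "M r \<le> length r"
  by (induction r rule: M.induct) auto

lemma gr_le: "gr d r \<le> length r"
  by (induction d r rule: gr.induct) auto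

lemma gr_M: "1 \<le> d \<Longrightarrow> gr d r = length r - (M r - (d - 1))"
proof (induction d r rule: gr.induct)
  case (1 d) then show ?case by simp
next
  case (2 d r) then show ?case using M_le[of r] by simp
next
  case (3 d r) then show ?case using M_le[of r] by auto
qed

lemma card_split:
  "card {r. length r = Suc m \<and> P r} =
   card {r. length r = m \<and> P (True # r)} + card {r. length r = m \<and> P (False # r)}"
proof -
  have fin: "finite {r :: bool list. length r = m}" by (rule finite_list_length)
  have eq: "{r. length r = Suc m \<and> P r} =
     (Cons True) ` {r. length r = m \<and> P (True # r)} \<union> (Cons False) ` {r. length r = m \<and> P (False # r)}"
  proof (rule set_eqI, rule iffI)
    fix x assume "x \<in> {r. length r = Suc m \<and> P r}"
    then obtain b r where "x = b # r" "length r = m" "P (b # r)" by (cases x) auto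
    then show "x \<in> (Cons True) ` {r. length r = m \<and> P (True # r)} \<union> (Cons False) ` {r. length r = m \<and> P (False # r)}"
      by (cases b) auto
  qed auto
  have f1: "finite {r. length r = m \<and> P (True # r)}" by (rule finite_subset[OF _ fin]) auto
  have f2: "finite {r. length r = m \<and> P (False # r)}" by (rule finite_subset[OF _ fin]) auto
  show ?thesis unfolding eq
    by (subst card_Un_disjoint) (use f1 f2 in \<open>auto simp: card_image\<close>)
qed

definition fB :: "nat \<Rightarrow> nat \<Rightarrow> nat" where
  "fB m a = (if a \<le> m then m choose ((m - a) div 2) else 0)"

lemma card_M: "card {r. length r = m \<and> M r = a} = fB m a"
proof (induction m arbitrary: a)
  case 0
  have "{r :: bool list. length r = 0 \<and> M r = a} = (if a = 0 then {[]} else {})" by auto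
  then show ?case by (simp add: fB_def)
next
  case (Suc m)
  have "card {r. length r = Suc m \<and> M r = a} =
     card {r. length r = m \<and> M r - 1 = a} + card {r. length r = m \<and> Suc (M r) = a}"
    by (subst card_split) simp
  also have "\<dots> = fB (Suc m) a"
  proof (cases a)
    case 0
    have "{r. length r = m \<and> M r - 1 = a} = {r. length r = m \<and> M r = 0} \<union> {r. length r = m \<and> M r = 1}"
      using 0 by auto
    moreover have "card ({r. length r = m \<and> M r = 0} \<union> {r. length r = m \<and> M r = 1})
       = card {r. length r = m \<and> M r = 0} + card {r. length r = m \<and> M r = 1}"
      by (rule card_Un_disjoint) (auto intro: finite_subset[OF _ finite_list_length[where n=m]])
    ultimately have "card {r. length r = m \<and> M r - 1 = a} = fB m 0 + fB m 1"
      using Suc.IH by simp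
    moreover have "{r. length r = m \<and> Suc (M r) = a} = {}" using 0 by auto
    moreover have "fB m 0 + fB m 1 = fB (Suc m) 0"
    proof (cases m)
      case 0 then show ?thesis by (simp add: fB_def)
    next
      case (Suc m')
      show ?thesis
      proof (cases "even m")
        case True
        then obtain h where h: "m = 2 * h" by blast
        with Suc obtain h' where h': "h = Suc h'" by (cases h) auto
        have "fB m 0 + fB m 1 = (2*h choose h) + (2*h choose h')"
          using h h' by (simp add: fB_def)
        also have "\<dots> = Suc (2*h) choose h" using h' by simp
        also have "\<dots> = fB (Suc m) 0" using h by (simp add: fB_def)
        finally show ?thesis .
      next
        case False
        then obtain h where h: "m = 2 * h + 1" using oddE by blast
        have sy: "(Suc (2*h) choose h) = (Suc (2*h) choose Suc h)"
          using binomial_symmetric[of h "Suc (2*h)"] by simp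
        have "fB m 0 + fB m 1 = (Suc (2*h) choose h) + (Suc (2*h) choose Suc h)"
          using h sy by (simp add: fB_def)
        also have "\<dots> = Suc (Suc (2*h)) choose Suc h"
          by simp
        also have "\<dots> = fB (Suc m) 0" using h by (simp add: fB_def)
        finally show ?thesis .
      qed
    qed
    ultimately show ?thesis using 0 by simp
  next
    case (Suc a')
    have e1: "{r. length r = m \<and> M r - 1 = a} = {r. length r = m \<and> M r = Suc a}" using Suc by auto
    have e2: "{r. length r = m \<and> Suc (M r) = a} = {r. length r = m \<and> M r = a'}" using Suc by auto
    have "fB m (Suc a) + fB m a' = fB (Suc m) a"
    proof -
      consider "a' > m" | "a' = m" | "Suc a' = m" | "Suc a' < m" by linarith
      then show ?thesis
      proof cases
        case 4
        define q where "q = m - a' - 2"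
        have q: "m = a' + 2 + q" using 4 unfolding q_def by arith
        have "fB m (Suc a) = m choose (q div 2)" using q Suc by (simp add: fB_def)
        moreover have "fB m a' = m choose Suc (q div 2)" using q by (simp add: fB_def)
        moreover have "fB (Suc m) a = Suc m choose Suc (q div 2)" using q Suc by (simp add: fB_def)
        ultimately show ?thesis by simp
      next
        case 1 then show ?thesis using Suc by (simp add: fB_def)
      next
        case 2 then show ?thesis using Suc by (simp add: fB_def)
      next
        case 3 then show ?thesis using Suc by (simp add: fB_def)
      qed
    qed
    then show ?thesis using e1 e2 Suc.IH by simp
  qed
  finally show ?case .
qed

lemma card_gr1: "i \<le> m \<Longrightarrow> card {r. length r = m \<and> gr 1 r = i} = m choose (i div 2)"
proof -
  assume i: "i \<le> m"
  have "{r. length r = m \<and> gr 1 r = i} = {r. length r = m \<and> M r = m - i}"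
    using i M_le by (auto simp: gr_M)
  then show ?thesis using i by (simp add: card_M fB_def)
qed

lemma card_gr0:
  assumes "1 \<le> j" "j - 1 \<le> m"
  shows "card {r. length r = m \<and> gr 0 r = j} + ((j - 1) choose ((j - 1) div 2 + 1))
         = m choose ((j - 1) div 2 + 1)"
  using assms(2)
proof (induction m)
  case 0
  then have "j = 1" using assms(1) by simp
  have "{r. length r = 0 \<and> gr 0 r = j} = {}" using \<open>j = 1\<close> by auto
  then show ?case using \<open>j = 1\<close> by simp
next
  case (Suc m)
  show ?case
  proof (cases "j - 1 = Suc m")
    case True
    have "\<forall>r. length r = Suc m \<longrightarrow> gr 0 r \<noteq> j"
    proof (intro allI impI)
      fix r :: "bool list" assume "length r = Suc m"
      then have "gr 0 r \<le> Suc m" using gr_le[of 0 r] by simp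
      with True assms(1) show "gr 0 r \<noteq> j" by simp
    qed
    then have E: "{r. length r = Suc m \<and> gr 0 r = j} = {}" by auto
    show ?thesis unfolding E using True by simp
  next
    case False
    then have jm: "j - 1 \<le> m" using Suc.prems by simp
    have "card {r. length r = Suc m \<and> gr 0 r = j} =
       card {r. length r = m \<and> Suc (gr 1 r) = j} + card {r. length r = m \<and> gr 0 r = j}"
      by (subst card_split) simp
    also have "{r. length r = m \<and> Suc (gr 1 r) = j} = {r. length r = m \<and> gr 1 r = j - 1}"
      using assms(1) by auto
    finally have "card {r. length r = Suc m \<and> gr 0 r = j} =
       (m choose ((j - 1) div 2)) + card {r. length r = m \<and> gr 0 r = j}"
      using card_gr1[OF jm] by simp
    then show ?thesis using Suc.IH[OF jm] by simp
  qed
qed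



definition ones :: "bool list \<Rightarrow> nat" where "ones xs = length (filter id xs)"

lemma W1: "1 \<le> d \<Longrightarrow> gr d r = length r \<or>
   (\<exists>q \<le> length r. length r - q + 2 * ones (take q r) + d \<le> gr d r + 1)"
proof (induction d r rule: gr.induct)
  case (1 d) then show ?case by simp
next
  case (2 d r)
  from "2.IH" consider "gr (Suc d) r = length r"
    | q where "q \<le> length r" "length r - q + 2 * ones (take q r) + Suc d \<le> gr (Suc d) r + 1" by auto
  then show ?case
  proof cases
    case 1 then show ?thesis by simp
  next
    case 2
    then show ?thesis
      by (intro disjI2 exI[of _ "Suc q"]) (auto simp: ones_def)
  qed
next
  case (3 d r)
  show ?case
  proof (cases "2 \<le> d")
    case True
    have d1: "1 \<le> d - 1" using True by simp
    from "3.IH"(1)[OF True d1] consider "gr (d - 1) r = length r"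
      | q where "q \<le> length r" "length r - q + 2 * ones (take q r) + (d - 1) \<le> gr (d - 1) r + 1" by blast
    then show ?thesis
    proof cases
      case 1 then show ?thesis using True by simp
    next
      case 2
      then show ?thesis using True
        by (intro disjI2 exI[of _ "Suc q"]) (auto simp: ones_def)
    qed
  next
    case False
    then have d1: "d = 1" using "3.prems" by simp
    from "3.IH"(2) False "3.prems" consider "gr d r = length r"
      | q where "q \<le> length r" "length r - q + 2 * ones (take q r) + d \<le> gr d r + 1" by auto
    then show ?thesis
    proof cases
      case 1 then show ?thesis using d1
        by (intro disjI2 exI[of _ "Suc 0"]) (auto simp: ones_def)
    next
      case 2
      then show ?thesis using d1
        by (intro disjI2 exI[of _ "Suc q"]) (auto simp: ones_def)
    qed
  qed
qed

lemma W1': "\<exists>q \<le> length r. length r - q + 2 * ones (take q r) \<le> gr 1 r"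
proof -
  from W1[of 1 r] show ?thesis
    by (auto intro: exI[of _ 0] simp: ones_def)
qed

lemma W0: "True \<in> set r \<Longrightarrow> \<exists>Q. 1 \<le> Q \<and> Q \<le> length r \<and> True \<in> set (take Q r) \<and>
   length r - Q + 2 * ones (take Q r) \<le> gr 0 r + 1"
proof (induction r)
  case Nil then show ?case by simp
next
  case (Cons x r)
  show ?case
  proof (cases x)
    case True
    obtain q where q: "q \<le> length r" "length r - q + 2 * ones (take q r) \<le> gr 1 r"
      using W1' by blast
    show ?thesis using True q
      by (intro exI[of _ "Suc q"]) (auto simp: ones_def)
  next
    case False
    with Cons.prems have "True \<in> set r" by simp
    then obtain Q where Q: "1 \<le> Q" "Q \<le> length r" "True \<in> set (take Q r)"
      "length r - Q + 2 * ones (take Q r) \<le> gr 0 r + 1" using Cons.IH by blast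
    show ?thesis using False Q
      by (intro exI[of _ "Suc Q"]) (auto simp: ones_def)
  qed
qed

lemma Ws: "True \<in> set s \<Longrightarrow> \<exists>i < length s. True \<in> set (drop i s) \<and>
   i + 2 * ones (drop i s) \<le> gr 0 (rev s) + 1"
proof -
  assume "True \<in> set s"
  then have "True \<in> set (rev s)" by simp
  from W0[OF this] obtain Q where Q: "1 \<le> Q" "Q \<le> length s" "True \<in> set (take Q (rev s))"
      "length s - Q + 2 * ones (take Q (rev s)) \<le> gr 0 (rev s) + 1" by auto
  have t: "take Q (rev s) = rev (drop (length s - Q) s)" by (rule take_rev)
  show ?thesis
    using Q unfolding t
    by (intro exI[of _ "length s - Q"]) (auto simp: ones_def rev_filter[symmetric])
qed

lemma succ_inj: "a < k \<Longrightarrow> b < k \<Longrightarrow> Suc a mod k = Suc b mod k \<Longrightarrow> a = b"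
  by (auto simp: mod_Suc split: if_splits)

lemma card_high_ones: "card {v. i < v \<and> v \<le> length s \<and> s ! (v - 1)} = ones (drop i s)"
proof -
  have "{v. i < v \<and> v \<le> length s \<and> s ! (v - 1)} =
        (\<lambda>j. j + i + 1) ` {j. j < length (drop i s) \<and> drop i s ! j}"
  proof (rule set_eqI, rule iffI)
    fix v assume "v \<in> {v. i < v \<and> v \<le> length s \<and> s ! (v - 1)}"
    then show "v \<in> (\<lambda>j. j + i + 1) ` {j. j < length (drop i s) \<and> drop i s ! j}"
      by (intro image_eqI[of _ _ "v - i - 1"]) auto
  qed (auto simp: add.commute)
  then have "card {v. i < v \<and> v \<le> length s \<and> s ! (v - 1)} = card {j. j < length (drop i s) \<and> drop i s ! j}"
    by (simp add: card_image inj_on_def)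
  then show ?thesis by (simp add: ones_def length_filter_conv_card)
qed

lemma cycle_wrap:
  assumes "\<forall>j0\<in>Lo. Suc j0 mod k \<in> Lo" "j0 \<in> Lo" "j0 < k"
  shows "\<forall>j<k. j \<in> Lo"
proof -
  have *: "(j0 + l) mod k \<in> Lo" for l
  proof (induction l)
    case 0 then show ?case using assms by simp
  next
    case (Suc l)
    have "(j0 + Suc l) mod k = Suc ((j0 + l) mod k) mod k" by (simp add: mod_Suc_eq)
    then show ?case using assms(1) Suc by simp
  qed
  show ?thesis
  proof (intro allI impI)
    fix j assume "j < k"
    have "(j0 + (k - j0 + j)) mod k = j" using \<open>j < k\<close> assms(3) by simp
    then show "j \<in> Lo" using *[of "k - j0 + j"] by simp
  qed
qed

lemma U:
  assumes cyc: "tg_is_cycle s c" and i: "i < length s" and tr: "True \<in> set (drop i s)"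
  shows "length c \<le> i + 2 * ones (drop i s)"
proof -
  define k where "k = length c"
  define m where "m = length s"
  define Lo where "Lo = {j. j < k \<and> c ! j \<le> i}"
  define HZ where "HZ = {j. j < k \<and> i < c ! j \<and> \<not> s ! (c ! j - 1)}"
  define HO where "HO = {j. j < k \<and> i < c ! j \<and> s ! (c ! j - 1)}"
  define succ where "succ j = Suc j mod k" for j
  have k3: "3 \<le> k" and dist: "distinct c" and sub: "set c \<subseteq> tg_vertices s"
    and adj: "\<And>j. j < k \<Longrightarrow> tg_adj s (c ! j) (c ! succ j)"
    using cyc unfolding tg_is_cycle_def k_def succ_def by auto
  have cle: "j < k \<Longrightarrow> c ! j \<le> m" for j
  proof -
    assume "j < k"
    then have "c ! j \<in> set c" by (simp add: k_def)
    with sub show ?thesis by (auto simp: tg_vertices_def m_def)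
  qed
  have "filter id (drop i s) \<noteq> []" using tr by (auto simp: filter_empty_conv)
  then have o1: "1 \<le> ones (drop i s)" by (simp add: ones_def Suc_le_eq)
  have injc: "inj_on (nth c) {..<k}" using dist by (simp add: inj_on_nth k_def)
  have fin: "finite Lo" "finite HZ" "finite HO" unfolding Lo_def HZ_def HO_def by auto
  have cardLo: "card Lo \<le> i + 1"
  proof -
    have "card Lo = card (nth c ` Lo)"
      by (rule card_image[symmetric], rule inj_on_subset[OF injc]) (auto simp: Lo_def)
    also have "\<dots> \<le> card {0..i}" by (rule card_mono) (auto simp: Lo_def)
    finally show ?thesis by simp
  qed
  have cardHO: "card HO \<le> ones (drop i s)"
  proof -
    have "card HO = card (nth c ` HO)"
      by (rule card_image[symmetric], rule inj_on_subset[OF injc]) (auto simp: HO_def)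
    also have "\<dots> \<le> card {v. i < v \<and> v \<le> length s \<and> s ! (v - 1)}"
      by (rule card_mono) (use cle in \<open>auto simp: HO_def m_def\<close>)
    finally show ?thesis using card_high_ones[of i s] by simp
  qed
  have succk: "j < k \<Longrightarrow> succ j < k" for j using k3 by (simp add: succ_def)
  have succinj: "inj_on succ {..<k}" by (auto simp: inj_on_def succ_def intro: succ_inj)
  have ZO: "j \<in> HZ \<Longrightarrow> succ j \<in> HO" for j
  proof -
    assume j: "j \<in> HZ"
    then have "j < k" by (simp add: HZ_def)
    from adj[OF this] have a: "c ! j \<noteq> c ! succ j" "s ! (max (c ! j) (c ! succ j) - 1)"
      by (auto simp: tg_adj_def)
    have "c ! j < c ! succ j"
    proof (rule ccontr)
      assume "\<not> ?thesis"
      then have "max (c ! j) (c ! succ j) = c ! j" by simp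
      with a j show False by (simp add: HZ_def)
    qed
    then show ?thesis using a j succk[OF \<open>j < k\<close>] by (auto simp: HZ_def HO_def max_def)
  qed
  have LoZ: "j \<in> Lo \<Longrightarrow> succ j \<notin> HZ" for j
  proof
    assume j: "j \<in> Lo" and z: "succ j \<in> HZ"
    then have "j < k" by (simp add: Lo_def)
    from adj[OF this] have a: "s ! (max (c ! j) (c ! succ j) - 1)"
      by (auto simp: tg_adj_def)
    have "max (c ! j) (c ! succ j) = c ! succ j" using j z by (auto simp: Lo_def HZ_def)
    with a z show False by (simp add: HZ_def)
  qed
  have HZHO: "card HZ \<le> card HO"
  proof -
    have "card HZ = card (succ ` HZ)"
      by (rule card_image[symmetric], rule inj_on_subset[OF succinj]) (auto simp: HZ_def)
    also have "\<dots> \<le> card HO" by (rule card_mono[OF fin(3)]) (auto intro: ZO)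
    finally show ?thesis .
  qed
  have part: "{..<k} = Lo \<union> HZ \<union> HO" unfolding Lo_def HZ_def HO_def by auto
  have kc: "k = card Lo + card HZ + card HO"
  proof -
    have "k = card (Lo \<union> HZ \<union> HO)" using part card_lessThan[of k] by simp
    also have "\<dots> = card (Lo \<union> HZ) + card HO"
      by (rule card_Un_disjoint) (use fin in \<open>auto simp: Lo_def HZ_def HO_def\<close>)
    also have "card (Lo \<union> HZ) = card Lo + card HZ"
      by (rule card_Un_disjoint) (use fin in \<open>auto simp: Lo_def HZ_def\<close>)
    finally show ?thesis .
  qed
  show ?thesis
  proof (cases "Lo = {}")
    case True
    then show ?thesis using kc HZHO cardHO unfolding k_def by simp
  next
    case False
    then obtain j0 where j0: "j0 \<in> Lo" by blast
    show ?thesis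
    proof (cases "\<forall>j0\<in>Lo. succ j0 \<in> Lo")
      case True
      then have "\<forall>j<k. j \<in> Lo" using cycle_wrap[of Lo k j0] j0 unfolding succ_def
        by (auto simp: Lo_def)
      then have "HZ = {}" "HO = {}" unfolding HZ_def HO_def Lo_def by auto
      then show ?thesis using kc cardLo o1 unfolding k_def by simp
    next
      case False
      then obtain j where j: "j \<in> Lo" "succ j \<notin> Lo" by blast
      have jk: "j < k" using j by (simp add: Lo_def)
      have "succ j \<in> HO" using j LoZ[OF j(1)] succk[OF jk] part by auto
      have "succ ` HZ \<subseteq> HO - {succ j}"
      proof
        fix x assume "x \<in> succ ` HZ"
        then obtain y where y: "y \<in> HZ" "x = succ y" by blast
        have "y \<noteq> j" using y j by (auto simp: HZ_def Lo_def)
        then have "succ y \<noteq> succ j" using succinj y jk by (auto simp: inj_on_def HZ_def)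
        then show "x \<in> HO - {succ j}" using ZO y by auto
      qed
      then have "card (succ ` HZ) \<le> card (HO - {succ j})" by (rule card_mono[rotated]) (use fin in auto)
      moreover have "card (succ ` HZ) = card HZ"
        by (rule card_image, rule inj_on_subset[OF succinj]) (auto simp: HZ_def)
      moreover have "card (HO - {succ j}) = card HO - 1" using \<open>succ j \<in> HO\<close> fin by simp
      moreover have "card HO \<ge> 1" using \<open>succ j \<in> HO\<close> fin
        by (metis One_nat_def Suc_leI card_gt_0_iff empty_iff)
      ultimately show ?thesis using kc cardLo cardHO unfolding k_def by linarith
    qed
  qed
qed



definition tinv :: "bool list \<Rightarrow> nat \<Rightarrow> nat list \<Rightarrow> nat list \<Rightarrow> bool" where
  "tinv s l F T \<longleftrightarrow> distinct (F @ T) \<and> set (F @ T) \<subseteq> {l<..length s} \<and> (\<forall>v\<in>set F. s ! (v - 1))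
     \<and> successively (tg_adj s) (F @ T) \<and> (F = [] \<longrightarrow> T = []) \<and> (T \<noteq> [] \<longrightarrow> s ! (last T - 1))"

lemma adj_one: "u < v \<Longrightarrow> v \<le> length s \<Longrightarrow> s ! (v - 1) \<Longrightarrow> tg_adj s u v \<and> tg_adj s v u"
  by (auto simp: tg_adj_def tg_vertices_def max_def)

lemma constr:
  "l \<le> length s \<Longrightarrow> tinv s l F T \<Longrightarrow>
   \<exists>F' T'. tinv s 0 F' T' \<and> length (F' @ T') = length (F @ T) + gr (length F) (rev (take l s))"
proof (induction l arbitrary: F T)
  case 0
  then show ?case by (intro exI[of _ F] exI[of _ T]) simp
next
  case (Suc l)
  have ls: "l < length s" using Suc.prems by simp
  have tk: "rev (take (Suc l) s) = s ! l # rev (take l s)"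
    using ls by (simp add: take_Suc_conv_app_nth)
  define u where "u = Suc l"
  have I: "distinct (F @ T)" "set (F @ T) \<subseteq> {Suc l<..length s}" "\<forall>v\<in>set F. s ! (v - 1)"
     "successively (tg_adj s) (F @ T)" "F = [] \<longrightarrow> T = []" "T \<noteq> [] \<longrightarrow> s ! (last T - 1)"
    using Suc.prems(2) unfolding tinv_def by auto
  show ?case
  proof (cases "s ! l")
    case True
    have tinv': "tinv s l (u # F) T"
      unfolding tinv_def
    proof (intro conjI)
      show "distinct ((u # F) @ T)" using I(1,2) by (auto simp: u_def)
      show "set ((u # F) @ T) \<subseteq> {l<..length s}" using I(2) ls by (auto simp: u_def)
      show "\<forall>v\<in>set (u # F). s ! (v - 1)" using I(3) True by (simp add: u_def)
      show "successively (tg_adj s) ((u # F) @ T)"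
      proof (cases F)
        case Nil then show ?thesis using I(5) by simp
      next
        case (Cons a F1)
        have "a \<in> set (F @ T)" using Cons by simp
        then have "u < a" "a \<le> length s" using I(2) by (auto simp: u_def)
        moreover have "s ! (a - 1)" using I(3) Cons by simp
        ultimately have "tg_adj s u a" using adj_one by blast
        then show ?thesis using I(4) Cons by (simp add: successively_Cons)
      qed
    qed (use I in auto)
    have "gr (length F) (rev (take (Suc l) s)) = Suc (gr (length (u # F)) (rev (take l s)))"
      using tk True by simp
    then show ?thesis using Suc.IH[OF _ tinv'] ls by fastforce
  next
    case False
    show ?thesis
    proof (cases "2 \<le> length F")
      case True
      then have "2 \<le> length (rev F)" by simp
      then obtain b a R where R: "rev F = b # a # R"
        unfolding numeral_2_eq_2 Suc_le_length_iff by blast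
      define A where "A = rev R"
      have F: "F = A @ [a, b]" using arg_cong[OF R, of rev] by (simp add: A_def)
      have ab: "a \<in> set (F @ T)" "b \<in> set (F @ T)" using F by auto
      then have abu: "u < a" "u < b" "a \<le> length s" "b \<le> length s" using I(2) by (auto simp: u_def)
      have abo: "s ! (a - 1)" "s ! (b - 1)" using I(3) F by auto
      have tinv': "tinv s l (A @ [a]) (u # b # T)"
        unfolding tinv_def
      proof (intro conjI)
        show "distinct ((A @ [a]) @ u # b # T)" using I(1,2) F by (auto simp: u_def)
        show "set ((A @ [a]) @ u # b # T) \<subseteq> {l<..length s}" using I(2) ls F by (auto simp: u_def)
        show "\<forall>v\<in>set (A @ [a]). s ! (v - 1)" using I(3) F by simp
        have "tg_adj s a u" "tg_adj s u b" using adj_one abu abo by blast+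
        then show "successively (tg_adj s) ((A @ [a]) @ u # b # T)"
          using I(4) F by (auto simp: successively_append_iff successively_Cons)
        show "u # b # T \<noteq> [] \<longrightarrow> s ! (last (u # b # T) - 1)"
          using I(6) abo by auto
      qed simp
      have "gr (length F) (rev (take (Suc l) s)) = Suc (gr (length (A @ [a])) (rev (take l s)))"
        using tk False True F by simp
      then show ?thesis using Suc.IH[OF _ tinv'] ls F by fastforce
    next
      case nt: False
      have tinv': "tinv s l F T" using Suc.prems(2) unfolding tinv_def by auto
      have "gr (length F) (rev (take (Suc l) s)) = gr (length F) (rev (take l s))"
        using tk False nt by simp
      then show ?thesis using Suc.IH[OF _ tinv'] ls by simp
    qed
  qed
qed



lemma succ_nth:
  assumes "successively R (xs @ [hd xs])" "xs \<noteq> []" "i < length xs"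
  shows "R (xs ! i) (xs ! ((i + 1) mod length xs))"
proof -
  have "R ((xs @ [hd xs]) ! i) ((xs @ [hd xs]) ! Suc i)"
    using successively_nth[OF assms(1)] assms(3) by simp
  moreover have "(xs @ [hd xs]) ! i = xs ! i" using assms(3) by (simp add: nth_append)
  moreover have "(xs @ [hd xs]) ! Suc i = xs ! ((i + 1) mod length xs)"
  proof (cases "Suc i < length xs")
    case True then show ?thesis by (simp add: nth_append)
  next
    case False
    then have "Suc i = length xs" using assms(3) by simp
    then show ?thesis using assms(2) by (simp add: nth_append hd_conv_nth)
  qed
  ultimately show ?thesis by simp
qed

lemma exist_cycle:
  assumes "3 \<le> gr 0 (rev s) + 1"
  shows "\<exists>c. tg_is_cycle s c \<and> length c = gr 0 (rev s) + 1"
proof -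
  have "tinv s (length s) [] []" by (simp add: tinv_def)
  from constr[OF _ this] obtain F T where FT: "tinv s 0 F T" "length (F @ T) = gr 0 (rev s)"
    by fastforce
  define P where "P = F @ T"
  have I: "distinct P" "set P \<subseteq> {0<..length s}" "\<forall>v\<in>set F. s ! (v - 1)"
     "successively (tg_adj s) P" "F = [] \<longrightarrow> T = []" "T \<noteq> [] \<longrightarrow> s ! (last T - 1)"
    using FT(1) unfolding tinv_def P_def by auto
  have lP: "2 \<le> length P" using FT(2) assms by (simp add: P_def)
  then have Fne: "F \<noteq> []" using I(5) P_def by auto
  have Pne: "P \<noteq> []" using lP by auto
  have hdP: "hd P \<in> set F" "hd P = hd F" using Fne by (auto simp: P_def)
  have lastP: "s ! (last P - 1)"
  proof (cases "T = []")
    case True then show ?thesis using I(3) Fne by (simp add: P_def)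
  next
    case False then show ?thesis using I(6) by (simp add: P_def)
  qed
  have inP: "v \<in> set P \<Longrightarrow> 0 < v \<and> v \<le> length s" for v using I(2) by auto
  have ho: "s ! (hd P - 1)" using I(3) hdP by auto
  have "hd P \<in> set P" using Pne by simp
  then have a1: "tg_adj s 0 (hd P)" using adj_one[of 0 "hd P" s] inP[of "hd P"] ho by auto
  have "last P \<in> set P" using Pne by simp
  then have a2: "tg_adj s (last P) 0" using adj_one[of 0 "last P" s] inP[of "last P"] lastP by auto
  define c where "c = 0 # P"
  have sc: "successively (tg_adj s) (c @ [hd c])"
    using I(4) a1 a2 Pne by (auto simp: c_def successively_append_iff successively_Cons)
  have "tg_is_cycle s c"
    unfolding tg_is_cycle_def
  proof (intro conjI allI impI)
    show "3 \<le> length c" using lP by (simp add: c_def)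
    show "distinct c" using I(1) inP by (auto simp: c_def)
    show "set c \<subseteq> tg_vertices s" using inP by (fastforce simp: c_def tg_vertices_def less_Suc_eq_le)
    fix i assume "i < length c"
    then show "tg_adj s (c ! i) (c ! ((i + 1) mod length c))"
      using succ_nth[OF sc] by (simp add: c_def)
  qed
  moreover have "length c = gr 0 (rev s) + 1" using FT(2) by (simp add: c_def P_def)
  ultimately show ?thesis by blast
qed

lemma cycle_bound:
  assumes "tg_is_cycle s c"
  shows "length c \<le> gr 0 (rev s) + 1"
proof -
  from assms have c3: "3 \<le> length c" and d: "distinct c" and sub: "set c \<subseteq> tg_vertices s"
    and all: "\<forall>i<length c. tg_adj s (c ! i) (c ! ((i + 1) mod length c))"
    unfolding tg_is_cycle_def by auto
  have a: "tg_adj s (c ! 0) (c ! (1 mod length c))" using all c3 by fastforce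
  define x where "x = max (c ! 0) (c ! (1 mod length c))"
  have "x \<in> tg_vertices s" using a by (auto simp: tg_adj_def x_def max_def)
  moreover have "x \<noteq> 0" using a by (auto simp: tg_adj_def x_def max_def)
  moreover have "s ! (x - 1)" using a by (simp add: tg_adj_def x_def)
  ultimately have x1: "x - 1 < length s" "s ! (x - 1)" by (auto simp: tg_vertices_def)
  then have "s ! (x - 1) \<in> set s" by (intro nth_mem)
  then have "True \<in> set s" using x1(2) by simp
  from Ws[OF this] obtain i where "i < length s" "True \<in> set (drop i s)"
    "i + 2 * ones (drop i s) \<le> gr 0 (rev s) + 1" by blast
  with U[OF assms] show ?thesis by fastforce
qed

lemma lc: "longest_cycle s = (if 3 \<le> gr 0 (rev s) + 1 then gr 0 (rev s) + 1 else 0)"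
proof -
  define G where "G = gr 0 (rev s) + 1"
  define S where "S = {length c |c. tg_is_cycle s c}"
  have le: "x \<in> S \<Longrightarrow> x \<le> G \<and> 3 \<le> x" for x
    using cycle_bound by (auto simp: S_def G_def tg_is_cycle_def)
  have fin: "finite (insert 0 S)" using le by (meson finite_atMost finite_insert finite_subset subsetI atMost_iff)
  show ?thesis
  proof (cases "3 \<le> G")
    case True
    then obtain c where "tg_is_cycle s c" "length c = G" using exist_cycle[of s] by (auto simp: G_def)
    then have "G \<in> S" unfolding S_def by blast
    then have "Max (insert 0 S) = G" using le fin by (intro Max_eqI) auto
    then show ?thesis using True by (simp add: longest_cycle_def S_def G_def)
  next
    case False
    then have "S = {}" using le by force
    then show ?thesis using False by (simp add: longest_cycle_def S_def G_def)
  qed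
qed

lemma card_rev_set: "card {s :: bool list. length s = m \<and> gr 0 (rev s) = j} = card {r. length r = m \<and> gr 0 r = j}"
proof -
  have "{r. length r = m \<and> gr 0 r = j} = rev ` {s :: bool list. length s = m \<and> gr 0 (rev s) = j}"
    by (auto intro: image_eqI[of _ rev "rev _"])
  then show ?thesis by (simp add: card_image inj_on_def)
qed

theorem mainTheorem10:
  fixes n k :: nat
  assumes "3 \<le> n" and "3 \<le> k" and "k \<le> n"
  shows "measure_pmf.prob (pmf_of_set {s :: bool list. length s = n - 1})
           {s. longest_cycle s = k}
         = (1/2) ^ (n - 1) * (real ((n - 1) choose (k div 2)) - real ((k - 2) choose (k div 2)))"
proof -
  define m where "m = n - 1"
  define S where "S = {s :: bool list. length s = m}"
  have finS: "finite S" unfolding S_def by (rule finite_list_length)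
  have cardS: "card S = 2 ^ m"
    using card_lists_length_eq[of "UNIV :: bool set" m] by (simp add: S_def)
  have neS: "S \<noteq> {}" using cardS by auto
  have key: "longest_cycle s = k \<longleftrightarrow> gr 0 (rev s) = k - 1" for s
  proof (cases "3 \<le> gr 0 (rev s) + 1")
    case True then show ?thesis unfolding lc[of s] using assms(2) by auto
  next
    case False then show ?thesis unfolding lc[of s] using assms(2) by auto
  qed
  have inter: "S \<inter> {s. longest_cycle s = k} = {s :: bool list. length s = m \<and> gr 0 (rev s) = k - 1}"
    unfolding S_def key by blast
  have cg: "card {r. length r = m \<and> gr 0 r = k - 1} + ((k - 1 - 1) choose ((k - 1 - 1) div 2 + 1))
         = m choose ((k - 1 - 1) div 2 + 1)"
    by (rule card_gr0) (use assms in \<open>auto simp: m_def\<close>)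
  have kd: "(k - 2) div 2 + 1 = k div 2" "k - 1 - 1 = k - 2" using assms(2) by auto
  have E: "card (S \<inter> {s. longest_cycle s = k}) + ((k - 2) choose (k div 2)) = m choose (k div 2)"
    using cg unfolding inter card_rev_set kd(2) kd(1) .
  have cg': "real (card (S \<inter> {s. longest_cycle s = k})) = real (m choose (k div 2)) - real ((k - 2) choose (k div 2))"
    using arg_cong[OF E, of real] by simp
  have "measure_pmf.prob (pmf_of_set S) {s. longest_cycle s = k} =
        real (card (S \<inter> {s. longest_cycle s = k})) / real (card S)"
    by (rule measure_pmf_of_set[OF neS finS])
  also have "\<dots> = (1/2) ^ m * (real (m choose (k div 2)) - real ((k - 2) choose (k div 2)))"
    unfolding cg' cardS by (simp add: power_one_over)
  finally show ?thesis unfolding S_def m_def .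
qed

end
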